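(* Let $\Sigma$ be a finite alphabet with $N=|\Sigma|\ge2$, let $\delta$ be a Hamming compatible metric on $\Sigma^*$, and let $u\in\Sigma_n$, $w\in\Sigma_m$ with $n\ge m$ and $\delta(u,w)<d_2(u,w)$. Let $h=H(\underline{u},\underline{w})$. Then exactly $(N-1)^{n-h}$ Hamming opposites $v$ of $u$ satisfy $H(\underline{u},\underline{w})+H(\underline{v},\underline{w})=m$, and every such $v$ satisfies $\delta(v,w)\ge d_2(v,w)$. In particular, when $N=2$, the unique Hamming opposite $v$ of $u$ satisfies $\delta(v,w)\ge d_2(v,w)$.
   Context: $\Sigma_n$ is the set of words of length $n$ over $\Sigma$, $\Sigma^*$ the set of all finite words, $l(u)$ the length of $u$, $H$ the Hamming distance between equal-length words. For arbitrary $x,y$, if $l(x)\ge l(y)$, $\underline{x}$ is the prefix of $x$ of length $l(y)$ and $\underline{y}=y$ (symmetrically otherwise). Metrics are integer-valued; a metric $\delta$ on $\Sigma^*$ is Hamming compatible if $\delta(x,y)=H(x,y)$ whenever $l(x)=l(y)$. $d_2(x,y)=H(\underline{x},\underline{y})+\lceil |l(x)-l(y)|/2\rceil$. Two words of the same length $n$ are Hamming opposites if their Hamming distance is $n$. *)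

theory Defs
  imports Complex_Main "HOL-Library.Cardinality"
begin

text \<open>Words over the alphabet are lists over a finite type 'a; the alphabet size N is CARD('a).\<close>

definition hamming :: "'a list \<Rightarrow> 'a list \<Rightarrow> nat" where
  "hamming x y = card {i. i < length x \<and> i < length y \<and> x ! i \<noteq> y ! i}"

text \<open>The underlined word: ul x y is the prefix of x of length min(l(x), l(y)).\<close>
definition ul :: "'a list \<Rightarrow> 'a list \<Rightarrow> 'a list" where
  "ul x y = take (length y) x"

definition is_metric :: "('a list \<Rightarrow> 'a list \<Rightarrow> int) \<Rightarrow> bool" where
  "is_metric d \<longleftrightarrow>
     (\<forall>x y. d x y \<ge> 0) \<and> (\<forall>x y. d x y = 0 \<longleftrightarrow> x = y) \<and> (\<forall>x y. d x y = d y x) \<and>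
     (\<forall>x y z. d x z \<le> d x y + d y z)"

definition hamming_compatible :: "('a list \<Rightarrow> 'a list \<Rightarrow> int) \<Rightarrow> bool" where
  "hamming_compatible d \<longleftrightarrow> (\<forall>x y. length x = length y \<longrightarrow> d x y = int (hamming x y))"

definition d2 :: "'a list \<Rightarrow> 'a list \<Rightarrow> int" where
  "d2 x y = int (hamming (ul x y) (ul y x)) + \<lceil>\<bar>real (length x) - real (length y)\<bar> / 2\<rceil>"

definition hamming_opposite :: "'a list \<Rightarrow> 'a list \<Rightarrow> bool" where
  "hamming_opposite u v \<longleftrightarrow> length v = length u \<and> hamming u v = length u"

end

theory Submission
  imports Defs
begin

lemma card_lists_pos:
  fixes A :: "nat \<Rightarrow> ('a::finite) set"
  shows "card {xs. length xs = n \<and> (\<forall>i<n. xs!i \<in> A i)} = (\<Prod>i<n. card (A i))"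
proof (induction n arbitrary: A)
  case 0
  then show ?case by simp
next
  case (Suc n)
  have eq: "{xs. length xs = Suc n \<and> (\<forall>i<Suc n. xs!i \<in> A i)}
      = (\<lambda>(x,xs). x#xs) ` (A 0 \<times> {xs. length xs = n \<and> (\<forall>i<n. xs!i \<in> A (Suc i))})"
  proof (intro set_eqI iffI)
    fix xs assume "xs \<in> {xs. length xs = Suc n \<and> (\<forall>i<Suc n. xs!i \<in> A i)}"
    then show "xs \<in> (\<lambda>(x,xs). x#xs) ` (A 0 \<times> {xs. length xs = n \<and> (\<forall>i<n. xs!i \<in> A (Suc i))})"
      by (cases xs) (auto simp: image_iff)
  next
    fix xs assume "xs \<in> (\<lambda>(x,xs). x#xs) ` (A 0 \<times> {xs. length xs = n \<and> (\<forall>i<n. xs!i \<in> A (Suc i))})"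
    then show "xs \<in> {xs. length xs = Suc n \<and> (\<forall>i<Suc n. xs!i \<in> A i)}"
      by (auto simp: less_Suc_eq_0_disj)
  qed
  have inj: "inj_on (\<lambda>(x,xs). x#xs) X" for X :: "('a \<times> 'a list) set"
    by (auto simp: inj_on_def)
  show ?case
    unfolding eq card_image[OF inj] card_cartesian_product Suc[of "\<lambda>i. A (Suc i)"]
    by (simp add: prod.lessThan_Suc_shift del: prod.lessThan_Suc)
qed

lemma ceil_half:
  fixes n m :: nat
  assumes "m \<le> n"
  shows "2 * \<lceil>\<bar>real n - real m\<bar> / 2\<rceil> \<le> int (n - m) + 1"
proof -
  have a: "\<bar>real n - real m\<bar> = real (n - m)" using assms by simp
  have "real_of_int \<lceil>real (n - m) / 2\<rceil> < real (n-m) / 2 + 1"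
    using ceiling_correct[of "real (n-m)/2"] by linarith
  then have "2 * \<lceil>real (n - m) / 2\<rceil> < int (n - m) + 2" by linarith
  then show ?thesis unfolding a by linarith
qed

lemma opp_lemma: fixes u v :: "'a list" assumes lu: "length u = n"
  shows "hamming_opposite u v \<longleftrightarrow> length v = n \<and> (\<forall>i<n. v!i \<noteq> u!i)"
  proof
    assume H: "hamming_opposite u v"
    then have lv: "length v = n" using lu by (simp add: hamming_opposite_def)
    have "card {i. i < n \<and> u!i \<noteq> v!i} = n" using H lu lv
      unfolding hamming_opposite_def hamming_def by simp
    then have e: "{i. i < n \<and> u!i \<noteq> v!i} = {..<n}"
      by (intro card_subset_eq) auto
    have "\<forall>i<n. v!i \<noteq> u!i"
    proof (intro allI impI)
      fix i assume "i < n" then have "i \<in> {i. i < n \<and> u!i \<noteq> v!i}" using e by simp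
      then show "v!i \<noteq> u!i" by auto
    qed
    then show "length v = n \<and> (\<forall>i<n. v!i \<noteq> u!i)" using lv by simp
  next
    assume a: "length v = n \<and> (\<forall>i<n. v!i \<noteq> u!i)"
    then have "{i. i < length u \<and> i < length v \<and> u!i \<noteq> v!i} = {..<n}" using lu by auto
    then show "hamming_opposite u v" using lu a
      unfolding hamming_opposite_def hamming_def by simp
  qed

theorem mainTheorem10:
  fixes \<delta> :: "('a::finite) list \<Rightarrow> 'a list \<Rightarrow> int"
    and u w :: "'a list" and n m h :: nat
  assumes "CARD('a) \<ge> 2"
    and "is_metric \<delta>" and "hamming_compatible \<delta>"
    and "length u = n" and "length w = m" and "n \<ge> m"
    and "\<delta> u w < d2 u w"
    and "h = hamming (ul u w) (ul w u)"
  shows "card {v. hamming_opposite u v \<and>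
                  hamming (ul u w) (ul w u) + hamming (ul v w) (ul w v) = m}
           = (CARD('a) - 1) ^ (n - h)
       \<and> (\<forall>v. hamming_opposite u v \<and>
               hamming (ul u w) (ul w u) + hamming (ul v w) (ul w v) = m
             \<longrightarrow> \<delta> v w \<ge> d2 v w)
       \<and> (CARD('a) = 2 \<longrightarrow> (\<exists>!v. hamming_opposite u v) \<and>
             (\<forall>v. hamming_opposite u v \<longrightarrow> \<delta> v w \<ge> d2 v w))"
proof -
  note lu = assms(4) and lw = assms(5) and nm = assms(6)
  define D where "D = {i. i < m \<and> u!i \<noteq> w!i}"
  have ulu: "ul u w = take m u" "ul w u = w" using lu lw nm by (auto simp: ul_def)
  have hD: "h = card D" unfolding assms(8) ulu hamming_def D_def using lu lw nm
    by (intro arg_cong[where f=card]) auto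
  have finD: "finite D" unfolding D_def by auto
  have Dsub: "D \<subseteq> {..<m}" unfolding D_def by auto
  have hm: "h \<le> m" using hD card_mono[OF _ Dsub] by simp
  have opp: "hamming_opposite u v \<longleftrightarrow> length v = n \<and> (\<forall>i<n. v!i \<noteq> u!i)" for v
    by (rule opp_lemma[OF lu])
  have Hv: "hamming (ul v w) (ul w v) = (m - h) + card {i\<in>D. v!i \<noteq> w!i}"
    if "length v = n" "\<forall>i<n. v!i \<noteq> u!i" for v
  proof -
    have ulv: "ul v w = take m v" "ul w v = w" using that lw nm by (auto simp: ul_def)
    have "hamming (ul v w) (ul w v) = card {i. i < m \<and> v!i \<noteq> w!i}"
      unfolding ulv hamming_def using that lw nm
      by (intro arg_cong[where f=card]) auto
    also have "{i. i < m \<and> v!i \<noteq> w!i} = ({..<m} - D) \<union> {i\<in>D. v!i \<noteq> w!i}"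
    proof -
      have vm: "\<forall>i<m. v!i \<noteq> u!i" using that nm by auto
      show ?thesis using vm unfolding D_def by auto
    qed
    also have "card \<dots> = card ({..<m} - D) + card {i\<in>D. v!i \<noteq> w!i}"
      by (rule card_Un_disjoint) (use finD in auto)
    also have "card ({..<m} - D) = m - h"
      using hD card_Diff_subset[OF finD Dsub] by simp
    finally show ?thesis .
  qed
  define A where "A i = (if i \<in> D then {w!i} else UNIV - {u!i})" for i
  have Sset: "{v. hamming_opposite u v \<and>
                  hamming (ul u w) (ul w u) + hamming (ul v w) (ul w v) = m}
          = {v. length v = n \<and> (\<forall>i<n. v!i \<in> A i)}" (is "?S = ?T")
  proof (intro set_eqI iffI)
    fix v assume "v \<in> ?S"
    then have o: "length v = n" "\<forall>i<n. v!i \<noteq> u!i"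
      and c: "h + hamming (ul v w) (ul w v) = m" using opp assms(8) by auto
    then have "card {i\<in>D. v!i \<noteq> w!i} = 0" using Hv[OF o] hm by simp
    then have "{i\<in>D. v!i \<noteq> w!i} = {}" using finD by simp
    then show "v \<in> ?T" using o unfolding A_def by auto
  next
    fix v assume "v \<in> ?T"
    then have lv: "length v = n" and a: "\<forall>i<n. v!i \<in> A i" by auto
    have o: "\<forall>i<n. v!i \<noteq> u!i" using a unfolding A_def D_def by (auto split: if_splits)
    have "v!i = w!i" if "i \<in> D" for i
    proof -
      have "i < n" using that Dsub nm by auto
      then have "v!i \<in> A i" using a by blast
      then show ?thesis using that unfolding A_def by simp
    qed
    then have "{i\<in>D. v!i \<noteq> w!i} = {}" by blast
    then have "card {i\<in>D. v!i \<noteq> w!i} = 0" by (simp only: card.empty)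
    then have "hamming (ul v w) (ul w v) = m - h" using Hv[OF lv o] by simp
    then show "v \<in> ?S" using opp lv o hm assms(8) by simp
  qed
  have cardS: "card ?S = (CARD('a) - 1) ^ (n - h)"
  proof -
    have "card ?S = (\<Prod>i<n. card (A i))" unfolding Sset by (rule card_lists_pos)
    also have "\<dots> = (\<Prod>i\<in>D. card (A i)) * (\<Prod>i\<in>{..<n} - D. card (A i))"
      using Dsub nm by (subst prod.subset_diff[of D]) auto
    also have "(\<Prod>i\<in>D. card (A i)) = 1" unfolding A_def by simp
    also have "(\<Prod>i\<in>{..<n} - D. card (A i)) = (\<Prod>i\<in>{..<n} - D. CARD('a) - 1)"
      unfolding A_def by (intro prod.cong) (auto simp: card_Diff_singleton)
    also have "\<dots> = (CARD('a) - 1) ^ (n - h)"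
    proof -
      have "D \<subseteq> {..<n}" using Dsub nm by auto
      then have "card ({..<n} - D) = n - h" using hD card_Diff_subset[OF finD] by simp
      then show ?thesis by simp
    qed
    finally show ?thesis by simp
  qed
  have part2: "\<delta> v w \<ge> d2 v w" if vS: "v \<in> ?S" for v
  proof -
    from vS have o: "length v = n" "\<forall>i<n. v!i \<noteq> u!i"
      and c: "h + hamming (ul v w) (ul w v) = m" using opp assms(8) by auto
    have huv: "hamming u v = n" using vS lu by (simp add: hamming_opposite_def)
    have duv: "\<delta> u v = int n" using assms(3) huv o lu by (simp add: hamming_compatible_def)
    have tri: "\<delta> u v \<le> \<delta> u w + \<delta> v w" using assms(2) unfolding is_metric_def by metis
    let ?c = "\<lceil>\<bar>real n - real m\<bar> / 2\<rceil>"
    have d2u: "d2 u w = int h + ?c" unfolding d2_def assms(8) using lu lw by simp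
    have d2v: "d2 v w = int (m - h) + ?c" unfolding d2_def using o lw c by simp
    have "2 * ?c \<le> int (n - m) + 1" by (rule ceil_half[OF nm])
    then show ?thesis using tri duv d2u d2v assms(7) hm nm by linarith
  qed
  have part3: "(\<exists>!v. hamming_opposite u v) \<and> (\<forall>v. hamming_opposite u v \<longrightarrow> \<delta> v w \<ge> d2 v w)"
    if N2: "CARD('a) = 2"
  proof -
    have allS: "v \<in> ?S" if "hamming_opposite u v" for v
    proof -
      have o: "length v = n" "\<forall>i<n. v!i \<noteq> u!i" using that opp by auto
      have "v!i = w!i" if "i \<in> D" for i
      proof (rule ccontr)
        assume ne: "v!i \<noteq> w!i"
        have "i < n" using that Dsub nm by auto
        then have d1: "v!i \<noteq> u!i" using o by blast
        have d2: "u!i \<noteq> w!i" using that unfolding D_def by blast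
        have "card {v!i, w!i, u!i} = 3" using ne d1 d2 by simp
        moreover have "card {v!i, w!i, u!i} \<le> CARD('a)" by (rule card_mono) auto
        ultimately show False using N2 by simp
      qed
      then have "{i\<in>D. v!i \<noteq> w!i} = {}" by auto
      then have "card {i\<in>D. v!i \<noteq> w!i} = 0" by (simp only: card.empty)
      then have "hamming (ul v w) (ul w v) = m - h" using Hv[OF o] by simp
      then show ?thesis using opp o hm assms(8) by simp
    qed
    have "card ?S = 1" using cardS N2 by simp
    then obtain v0 where S0: "?S = {v0}" using card_1_singletonE by blast
    have v0S: "v0 \<in> ?S" using S0 by blast
    then have v0o: "hamming_opposite u v0" by simp
    have "v = v0" if "hamming_opposite u v" for v
    proof -
      have "v \<in> ?S" using allS that by blast
      then show ?thesis using S0 by simp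
    qed
    then have eu: "\<exists>!v. hamming_opposite u v" using v0o by blast
    have "\<forall>v. hamming_opposite u v \<longrightarrow> \<delta> v w \<ge> d2 v w"
    proof (intro allI impI)
      fix v assume "hamming_opposite u v"
      then show "\<delta> v w \<ge> d2 v w" using part2 allS by blast
    qed
    then show ?thesis using eu by blast
  qed
  have p2: "\<forall>v. hamming_opposite u v \<and>
               hamming (ul u w) (ul w u) + hamming (ul v w) (ul w v) = m
             \<longrightarrow> \<delta> v w \<ge> d2 v w"
  proof (intro allI impI)
    fix v assume "hamming_opposite u v \<and>
               hamming (ul u w) (ul w u) + hamming (ul v w) (ul w v) = m"
    then show "\<delta> v w \<ge> d2 v w" by (intro part2) simp
  qed
  show ?thesis
  proof (intro conjI impI)
    show "card ?S = (CARD('a) - 1) ^ (n - h)" by (rule cardS)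
    show "\<forall>v. hamming_opposite u v \<and>
               hamming (ul u w) (ul w u) + hamming (ul v w) (ul w v) = m
             \<longrightarrow> \<delta> v w \<ge> d2 v w" by (rule p2)
  next
    assume N: "CARD('a) = 2"
    show "\<exists>!v. hamming_opposite u v" using part3[OF N] by (rule conjunct1)
    show "\<forall>v. hamming_opposite u v \<longrightarrow> \<delta> v w \<ge> d2 v w" using part3[OF N] by (rule conjunct2)
  qed
qed

end
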